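(* Let $X$ be a topological space with topology $\tau$ and let $\hat X$ denote the set $X$ with the semi-regularization topology $\hat\tau$. If $X$ is strongly $\Theta$-discrete homogeneous, then $\hat X$ is also strongly $\Theta$-discrete homogeneous.
   Context: An open set $O$ is regular open if it equals the interior of its closure. The semi-regularization $\hat\tau$ of $\tau$ is the topology on $X$ generated by the base of all regular open subsets of $(X,\tau)$; $\hat X$ is Hausdorff iff $X$ is. A subset $D$ of a space $Y$ is $\Theta$-discrete if each point $y\in Y$ has a neighbourhood whose closure contains at most one point of $D$. A Hausdorff space $Y$ is strongly $\Theta$-discrete homogeneous (s$\Theta$-DH) if for any two $\Theta$-discrete subsets $A,B$ of $Y$ and any bijection $f\colon A\to B$, $f$ extends to a homeomorphism of $Y$ onto itself. *)

theory Defs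
  imports "HOL-Analysis.Analysis"
begin

definition regular_openin :: "'a topology \<Rightarrow> 'a set \<Rightarrow> bool" where
  "regular_openin X U \<longleftrightarrow> openin X U \<and> X interior_of (X closure_of U) = U"

text \<open>Semi-regularization: topology on the same carrier generated by the regular open sets
  (they form a base, so the generated topology is that of unions of regular open sets).\<close>
definition semiregularization :: "'a topology \<Rightarrow> 'a topology" where
  "semiregularization X = topology_generated_by {U. regular_openin X U}"

definition theta_discrete :: "'a topology \<Rightarrow> 'a set \<Rightarrow> bool" where
  "theta_discrete Y D \<longleftrightarrow> D \<subseteq> topspace Y \<and>
     (\<forall>y\<in>topspace Y. \<exists>U. openin Y U \<and> y \<in> U \<and>
        (\<forall>a b. a \<in> D \<and> a \<in> Y closure_of U \<and> b \<in> D \<and> b \<in> Y closure_of U \<longrightarrow> a = b))"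

definition strongly_theta_DH :: "'a topology \<Rightarrow> bool" where
  "strongly_theta_DH Y \<longleftrightarrow> Hausdorff_space Y \<and>
     (\<forall>A B f. theta_discrete Y A \<and> theta_discrete Y B \<and> bij_betw f A B \<longrightarrow>
        (\<exists>h. homeomorphic_map Y Y h \<and> (\<forall>x\<in>A. h x = f x)))"

end

theory Submission
  imports Defs
begin

lemma ro_open: "regular_openin X U \<Longrightarrow> openin X U"
  by (simp add: regular_openin_def)

lemma ro_intcl: "regular_openin X (X interior_of (X closure_of U))"
proof -
  let ?A = "X interior_of (X closure_of U)"
  have o: "openin X ?A" by simp
  have "X closure_of ?A \<subseteq> X closure_of U"
    by (metis closure_of_closure_of closure_of_mono interior_of_subset)
  then have "X interior_of (X closure_of ?A) \<subseteq> ?A"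
    by (simp add: interior_of_mono)
  moreover have "?A \<subseteq> X interior_of (X closure_of ?A)"
    by (metis closure_of_subset interior_of_maximal o openin_subset)
  ultimately show ?thesis unfolding regular_openin_def by auto
qed

lemma ro_topspace: "regular_openin X (topspace X)"
  unfolding regular_openin_def closure_of_topspace interior_of_topspace
  by (intro conjI openin_topspace refl)

lemma sr_topspace: "topspace (semiregularization X) = topspace X"
proof -
  have "\<Union>{U. regular_openin X U} = topspace X"
  proof
    show "\<Union>{U. regular_openin X U} \<subseteq> topspace X"
    proof (rule Union_least)
      fix U assume "U \<in> {U. regular_openin X U}"
      then show "U \<subseteq> topspace X" by (intro openin_subset ro_open) simp
    qed
    show "topspace X \<subseteq> \<Union>{U. regular_openin X U}"
      by (rule Union_upper) (simp add: ro_topspace)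
  qed
  then show ?thesis unfolding semiregularization_def by simp
qed

lemma sr_open_ro: "regular_openin X U \<Longrightarrow> openin (semiregularization X) U"
  unfolding semiregularization_def by (simp add: topology_generated_by_Basis)

lemma sr_openin: "openin (semiregularization X) U \<Longrightarrow> openin X U"
  unfolding semiregularization_def openin_topology_generated_by_iff
  apply (rule generate_topology_on_coarsest[where T="openin X"])
  using ro_open by auto

lemma sr_closure: "X closure_of U \<subseteq> semiregularization X closure_of U"
proof
  fix x assume "x \<in> X closure_of U"
  then have x: "x \<in> topspace X" and h: "\<And>T. x \<in> T \<Longrightarrow> openin X T \<Longrightarrow> \<exists>y. y \<in> U \<and> y \<in> T"
    unfolding in_closure_of by auto
  show "x \<in> semiregularization X closure_of U"
    unfolding in_closure_of sr_topspace
  proof (intro conjI allI impI)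
    show "x \<in> topspace X" by (rule x)
    fix T assume "x \<in> T \<and> openin (semiregularization X) T"
    then show "\<exists>y. y \<in> U \<and> y \<in> T" using h sr_openin by auto
  qed
qed

lemma disj_intcl:
  assumes "openin X U" "openin X V" "U \<inter> V = {}"
  shows "X interior_of (X closure_of U) \<inter> X interior_of (X closure_of V) = {}"
proof -
  have "U \<inter> X closure_of V = {}" using assms openin_Int_closure_of_eq_empty by blast
  then have "U \<inter> X interior_of (X closure_of V) = {}" using interior_of_subset[of X "X closure_of V"] by blast
  then have "X interior_of (X closure_of V) \<inter> X closure_of U = {}"
    using openin_Int_closure_of_eq_empty[of X "X interior_of (X closure_of V)" U] by auto
  then show ?thesis using interior_of_subset[of X "X closure_of U"] by blast
qed

lemma sr_Hausdorff:
  assumes "Hausdorff_space X" shows "Hausdorff_space (semiregularization X)"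
  unfolding Hausdorff_space_def sr_topspace
proof (intro allI impI)
  fix x y assume h: "x \<in> topspace X \<and> y \<in> topspace X \<and> x \<noteq> y"
  then obtain U V where UV: "openin X U" "openin X V" "x \<in> U" "y \<in> V" "disjnt U V"
    using assms unfolding Hausdorff_space_def by metis
  let ?U = "X interior_of (X closure_of U)" and ?V = "X interior_of (X closure_of V)"
  have "U \<subseteq> ?U" by (meson UV(1) closure_of_subset interior_of_maximal openin_subset)
  moreover have "V \<subseteq> ?V" by (meson UV(2) closure_of_subset interior_of_maximal openin_subset)
  moreover have "?U \<inter> ?V = {}" using disj_intcl UV by (metis disjnt_def)
  ultimately show "\<exists>U V. openin (semiregularization X) U \<and> openin (semiregularization X) V \<and>
        x \<in> U \<and> y \<in> V \<and> disjnt U V"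
  proof (intro exI conjI)
    show "openin (semiregularization X) ?U" "openin (semiregularization X) ?V"
      by (rule sr_open_ro[OF ro_intcl])+
    show "x \<in> ?U" using \<open>U \<subseteq> ?U\<close> UV(3) by blast
    show "y \<in> ?V" using \<open>V \<subseteq> ?V\<close> UV(4) by blast
    show "disjnt ?U ?V" using \<open>?U \<inter> ?V = {}\<close> by (simp add: disjnt_def)
  qed
qed

lemma sr_theta: "theta_discrete (semiregularization X) D \<Longrightarrow> theta_discrete X D"
proof -
  assume a: "theta_discrete (semiregularization X) D"
  have a0: "D \<subseteq> topspace (semiregularization X) \<and> (\<forall>y\<in>topspace (semiregularization X). \<exists>U. openin (semiregularization X) U \<and> y \<in> U \<and>
        (\<forall>a b. a \<in> D \<and> a \<in> semiregularization X closure_of U \<and> b \<in> D \<and> b \<in> semiregularization X closure_of U \<longrightarrow> a = b))"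
    using a unfolding theta_discrete_def by assumption
  have a1: "D \<subseteq> topspace X" using conjunct1[OF a0] by (simp only: sr_topspace)
  have a2: "\<exists>U. openin X U \<and> y \<in> U \<and>
        (\<forall>a b. a \<in> D \<and> a \<in> X closure_of U \<and> b \<in> D \<and> b \<in> X closure_of U \<longrightarrow> a = b)"
    if y: "y \<in> topspace X" for y
  proof -
    have "y \<in> topspace (semiregularization X)" using y by (simp only: sr_topspace)
    from bspec[OF conjunct2[OF a0] this] obtain U where U: "openin (semiregularization X) U \<and> y \<in> U \<and>
      (\<forall>a b. a \<in> D \<and> a \<in> semiregularization X closure_of U \<and> b \<in> D \<and> b \<in> semiregularization X closure_of U \<longrightarrow> a = b)"
      by (rule exE)
    have c: "X closure_of U \<subseteq> semiregularization X closure_of U" by (rule sr_closure)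
    have o: "openin X U" by (rule sr_openin[OF conjunct1[OF U]])
    have yU: "y \<in> U" by (rule conjunct1[OF conjunct2[OF U]])
    have d: "\<forall>a b. a \<in> D \<and> a \<in> X closure_of U \<and> b \<in> D \<and> b \<in> X closure_of U \<longrightarrow> a = b"
    proof (intro allI impI)
      fix a b assume ab: "a \<in> D \<and> a \<in> X closure_of U \<and> b \<in> D \<and> b \<in> X closure_of U"
      have "a \<in> D \<and> a \<in> semiregularization X closure_of U \<and> b \<in> D \<and> b \<in> semiregularization X closure_of U"
        using ab c[THEN subsetD] by (intro conjI) (elim conjE; assumption)+
      then show "a = b" by (rule conjunct2[OF conjunct2[OF U], rule_format])
    qed
    show ?thesis by (rule exI[of _ U], intro conjI, rule o, rule yU, rule d)
  qed
  show "theta_discrete X D" unfolding theta_discrete_def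
  proof (rule conjI[OF a1], rule ballI)
    fix y assume "y \<in> topspace X"
    then show "\<exists>U. openin X U \<and> y \<in> U \<and>
        (\<forall>a b. a \<in> D \<and> a \<in> X closure_of U \<and> b \<in> D \<and> b \<in> X closure_of U \<longrightarrow> a = b)"
      by (rule a2)
  qed
qed

lemma ro_homeo:
  assumes "homeomorphic_map X X g" "regular_openin X U"
  shows "regular_openin X (g ` U)"
proof -
  have U: "U \<subseteq> topspace X" using assms(2) ro_open openin_subset by blast
  have cU: "X closure_of U \<subseteq> topspace X" by (simp add: closure_of_subset_topspace)
  have "openin X (g ` U)" using homeomorphic_map_openness[OF assms(1) U] ro_open assms(2) by blast
  moreover have "X interior_of (X closure_of (g ` U)) = g ` U"
    using homeomorphic_map_closure_of[OF assms(1) U] homeomorphic_map_interior_of[OF assms(1) cU]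
      assms(2) unfolding regular_openin_def by simp
  ultimately show ?thesis unfolding regular_openin_def by simp
qed

lemma sr_cont:
  assumes "homeomorphic_maps X X h g"
  shows "continuous_map (semiregularization X) (semiregularization X) h"
proof -
  have hg: "homeomorphic_map X X g" using assms homeomorphic_maps_map homeomorphic_maps_sym by blast
  have hc: "continuous_map X X h" and gc: "continuous_map X X g"
    and gh: "\<forall>x\<in>topspace X. g (h x) = x" and hg2: "\<forall>y\<in>topspace X. h (g y) = y"
    using assms unfolding homeomorphic_maps_def by auto
  have "continuous_map (semiregularization X) (topology_generated_by {U. regular_openin X U}) h"
  proof (rule continuous_on_generated_topo)
    fix U assume "U \<in> {U. regular_openin X U}"
    then have r: "regular_openin X U" by simp
    have U: "U \<subseteq> topspace X" using r ro_open openin_subset by blast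
    have "h -` U \<inter> topspace X = g ` U"
    proof
      show "h -` U \<inter> topspace X \<subseteq> g ` U"
      proof
        fix x assume "x \<in> h -` U \<inter> topspace X"
        then have "h x \<in> U" "g (h x) = x" using gh by auto
        then show "x \<in> g ` U" by (metis imageI)
      qed
      show "g ` U \<subseteq> h -` U \<inter> topspace X"
      proof
        fix z assume "z \<in> g ` U"
        then obtain y where y: "y \<in> U" "z = g y" by blast
        then have "y \<in> topspace X" using U by blast
        then have "g y \<in> topspace X" "h (g y) = y"
          using gc hg2 continuous_map_image_subset_topspace by fastforce+
        then show "z \<in> h -` U \<inter> topspace X" using y by simp
      qed
    qed
    then show "openin (semiregularization X) (h -` U \<inter> topspace (semiregularization X))"
      using sr_open_ro[OF ro_homeo[OF hg r]] unfolding sr_topspace by simp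
  next
    have "h ` topspace X \<subseteq> topspace X" using hc continuous_map_image_subset_topspace by blast
    moreover have "topspace X \<in> {U. regular_openin X U}" using ro_topspace[of X] by simp
    ultimately show "h ` topspace (semiregularization X) \<subseteq> \<Union> {U. regular_openin X U}"
      unfolding sr_topspace by blast
  qed
  moreover have eq: "semiregularization X = topology_generated_by {U. regular_openin X U}"
    by (rule semiregularization_def)
  ultimately show ?thesis by (simp only: eq)
qed

lemma sr_homeo:
  assumes "homeomorphic_map X X h"
  shows "homeomorphic_map (semiregularization X) (semiregularization X) h"
proof -
  obtain g where g: "homeomorphic_maps X X h g" using assms homeomorphic_map_maps by blast
  have g': "homeomorphic_maps X X g h" using g homeomorphic_maps_sym by blast
  have "homeomorphic_maps (semiregularization X) (semiregularization X) h g"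
    using sr_cont[OF g] sr_cont[OF g'] g unfolding homeomorphic_maps_def sr_topspace by blast
  then show ?thesis using homeomorphic_maps_map by blast
qed

theorem mainTheorem15:
  fixes X :: "'a topology"
  assumes "strongly_theta_DH X"
  shows "strongly_theta_DH (semiregularization X)"
  unfolding strongly_theta_DH_def
proof (intro conjI allI impI)
  show "Hausdorff_space (semiregularization X)"
    using assms sr_Hausdorff unfolding strongly_theta_DH_def by blast
  fix A B f
  assume h: "theta_discrete (semiregularization X) A \<and> theta_discrete (semiregularization X) B \<and> bij_betw f A B"
  then have "theta_discrete X A" "theta_discrete X B" "bij_betw f A B" using sr_theta by blast+
  then obtain g where "homeomorphic_map X X g" "\<forall>x\<in>A. g x = f x"
    using assms unfolding strongly_theta_DH_def by blast
  then show "\<exists>h. homeomorphic_map (semiregularization X) (semiregularization X) h \<and> (\<forall>x\<in>A. h x = f x)"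
    using sr_homeo by blast
qed

end
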